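(* Let $0<\phi<\pi/6$, $T>0$, $F\in\mathcal A_\phi$, $j\in\{0,1,2,3\}$, $k\ge0$. For $\nu>2\rho_0+1$, for all $p\in\mathcal S_\phi$ and $0\le t\le T$, $$\Big|\int_0^t\big[(p^jF)*B_{j,k}*F^{*k}\big](p,\tau)\,e^{-p^3(t-\tau)}\,d\tau\Big|\le\frac{C(\phi)}{M_0(1+|p|^2)}\,\||B_{j,k}|*|F|\|_\nu\,\|F\|_\nu^k\,e^{\nu|p|}\,T^{(3-j)/3},$$ where the constant $C(\phi)$ is independent of $T$ but depends on $\phi$.
   Context: Let $\rho_0>0$; $b_{j,k}(y,t)$ is analytic in $y$ on $\{(y,t):\arg y\in(-2\pi/3,2\pi/3),|y|>\rho_0,0\le t\le T\}$ with $|y^{\alpha_j+k\beta}b_{j,k}|<A_b(T)$ ($\beta,\alpha_j>0$), and $B_{j,k}(p,t)=\frac1{2\pi i}\int_{\mathcal C}e^{py}b_{j,k}(y,t)dy$ with $\mathcal C=\{c+ire^{i\phi'\mathrm{sgn}(r)}:r\in\mathbb R\}$, $c$ large, $\phi<\phi'<\pi/6$. $\mathcal S_\phi=\{p:\arg p\in(-\phi,\phi),0<|p|<\infty\}$, $\mathcal K=\overline{\mathcal S_\phi}\times[0,T]$; $\|G\|_\nu=M_0\sup_{\mathcal K}(1+|p|^2)e^{-\nu|p|}|G(p,t)|$ (also for continuous functions on $\mathcal K$), $M_0=\sup_{s\ge0}\frac{2(1+s^2)(\ln(1+s^2)+s\arctan s)}{s(s^2+4)}$; $\mathcal A_\phi$: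 functions analytic in $p\in\mathcal S_\phi$, continuous on $\overline{\mathcal S_\phi}$ for each $t$, with finite norm. $(F*G)(p,t)=\int_0^pF(s,t)G(p-s,t)ds$ along $[0,p]$; $F^{*k}$ is the $k$-fold convolution power, with $X*F^{*0}=X$. For $p=|p|e^{i\theta}$, $(|B|*|F|)(p,t)=\int_0^{|p|}|B(se^{i\theta},t)||F(p-se^{i\theta},t)|ds$. *)

theory Defs
  imports "HOL-Complex_Analysis.Complex_Analysis"
begin

definition sector :: "real \<Rightarrow> complex set" where
  "sector \<phi> = {p. p \<noteq> 0 \<and> \<bar>Arg p\<bar> < \<phi>}"

definition b_domain :: "real \<Rightarrow> complex set" where
  "b_domain \<rho>0 = {y. \<bar>Arg y\<bar> < 2 * pi / 3 \<and> cmod y > \<rho>0}"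

text \<open>The constant M_0 (the integrand is 0 at s = 0, which is its limit there).\<close>
definition M0 :: real where
  "M0 = (SUP s\<in>{0::real..}. 2 * (1 + s^2) * (ln (1 + s^2) + s * arctan s) / (s * (s^2 + 4)))"

definition nu_norm :: "real \<Rightarrow> real \<Rightarrow> real \<Rightarrow> (complex \<Rightarrow> real \<Rightarrow> 'a::real_normed_vector) \<Rightarrow> ereal" where
  "nu_norm \<phi> T \<nu> G = ereal M0 *
     (SUP z\<in>closure (sector \<phi>) \<times> {0..T}.
        ereal ((1 + (cmod (fst z))^2) * exp (- \<nu> * cmod (fst z)) * norm (G (fst z) (snd z))))"

definition in_A :: "real \<Rightarrow> real \<Rightarrow> real \<Rightarrow> (complex \<Rightarrow> real \<Rightarrow> complex) \<Rightarrow> bool" where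
  "in_A \<phi> T \<nu> F \<longleftrightarrow>
     (\<forall>t\<in>{0..T}. (\<lambda>p. F p t) holomorphic_on sector \<phi> \<and>
                  continuous_on (closure (sector \<phi>)) (\<lambda>p. F p t)) \<and>
     nu_norm \<phi> T \<nu> F < \<infinity>"

definition conv :: "(complex \<Rightarrow> real \<Rightarrow> complex) \<Rightarrow> (complex \<Rightarrow> real \<Rightarrow> complex) \<Rightarrow> complex \<Rightarrow> real \<Rightarrow> complex" where
  "conv F G = (\<lambda>p t. contour_integral (linepath 0 p) (\<lambda>s. F s t * G (p - s) t))"

fun conv_pow :: "(complex \<Rightarrow> real \<Rightarrow> complex) \<Rightarrow> (complex \<Rightarrow> real \<Rightarrow> complex) \<Rightarrow> nat \<Rightarrow> complex \<Rightarrow> real \<Rightarrow> complex" where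
  "conv_pow X F 0 = X"
| "conv_pow X F (Suc k) = conv (conv_pow X F k) F"

definition abs_conv :: "(complex \<Rightarrow> real \<Rightarrow> complex) \<Rightarrow> (complex \<Rightarrow> real \<Rightarrow> complex) \<Rightarrow> complex \<Rightarrow> real \<Rightarrow> real" where
  "abs_conv B F = (\<lambda>p t. integral {0..cmod p}
      (\<lambda>s. cmod (B (of_real s * sgn p) t) * cmod (F (p - of_real s * sgn p) t)))"

definition contour_C :: "real \<Rightarrow> real \<Rightarrow> real \<Rightarrow> complex" where
  "contour_C c \<phi>' r = of_real c + \<i> * of_real r * exp (\<i> * of_real (\<phi>' * sgn r))"

definition Bfun :: "real \<Rightarrow> real \<Rightarrow> (complex \<Rightarrow> real \<Rightarrow> complex) \<Rightarrow> complex \<Rightarrow> real \<Rightarrow> complex" where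
  "Bfun c \<phi>' b p t = (1 / (2 * of_real pi * \<i>)) *
     integral UNIV (\<lambda>r. exp (p * contour_C c \<phi>' r) * b (contour_C c \<phi>' r) t
                          * (\<i> * exp (\<i> * of_real (\<phi>' * sgn r))))"

end

theory Submission
  imports Defs
begin

definition gM :: "real \<Rightarrow> real" where
  "gM s = 2 * (1 + s^2) * (ln (1 + s^2) + s * arctan s) / (s * (s^2 + 4))"

lemma gM_nonneg: "0 \<le> s \<Longrightarrow> 0 \<le> gM s"
  unfolding gM_def
  by (intro divide_nonneg_nonneg mult_nonneg_nonneg add_nonneg_nonneg) (auto)

lemma gM_le8: "0 \<le> s \<Longrightarrow> gM s \<le> 8"
proof (cases "s = 0")
  case True thus ?thesis by (simp add: gM_def)
next
  case False
  assume s: "0 \<le> s"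
  hence sp: "0 < s" using False by simp
  have l1: "ln (1 + s^2) \<le> 2 * s"
  proof -
    have "ln (1 + s^2) \<le> ln ((1+s)^2)" using s by (intro ln_mono) (auto simp: power2_eq_square algebra_simps add_pos_nonneg)
    also have "\<dots> = 2 * ln (1+s)" using s by (simp add: ln_realpow)
    also have "\<dots> \<le> 2 * s" using ln_le_minus_one[of "1+s"] s by simp
    finally show ?thesis .
  qed
  have "arctan s \<le> 2" using arctan_ubound[of s] pi_less_4 by linarith
  hence "s * arctan s \<le> s * 2" using s by (intro mult_left_mono) auto
  hence l2: "s * arctan s \<le> 2 * s" by simp
  have "2 * (1 + s^2) * (ln (1 + s^2) + s * arctan s) \<le> 2 * (1 + s^2) * (4 * s)"
    using l1 l2 by (intro mult_left_mono) auto
  also have "\<dots> \<le> 8 * (s * (s^2 + 4))" using sp by (simp add: algebra_simps power2_eq_square)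
  finally have "2 * (1 + s^2) * (ln (1 + s^2) + s * arctan s) \<le> 8 * (s * (s^2 + 4))" .
  moreover have "0 < s * (s^2 + 4)" using sp by (simp add: add_nonneg_pos)
  ultimately show ?thesis unfolding gM_def by (simp add: pos_divide_le_eq)
qed

lemma bdd_gM: "bdd_above (gM ` {0..})"
  by (rule bdd_aboveI[of _ 8]) (auto intro: gM_le8)

lemma M0_eq: "M0 = (SUP s\<in>{0::real..}. gM s)"
  unfolding M0_def gM_def by simp

lemma gM_le_M0: "0 \<le> s \<Longrightarrow> gM s \<le> M0"
  unfolding M0_eq by (rule cSUP_upper) (use bdd_gM in auto)

lemma M0_pos: "0 < M0"
proof -
  have "0 < gM 1" unfolding gM_def by (auto intro!: divide_pos_pos add_pos_nonneg simp: add_pos_nonneg)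
  thus ?thesis using gM_le_M0[of 1] by simp
qed

lemma sq_ne: "(x::real)^2 + 4 \<noteq> 0" "1 + (x::real)^2 \<noteq> 0"
  by (metis add_nonneg_pos zero_le_power2 zero_less_numeral less_irrefl) (metis add_pos_nonneg zero_le_power2 zero_less_one less_irrefl)

lemma aux_alg: fixes x L R D E :: real assumes x: "0 < x" "D \<noteq> 0" "E \<noteq> 0" shows
  "2 / (x * D) * L + 2 * (1 / D) * R = 2 * E * (L + x * R) / (x * D) / E"
  using assms by (simp add: field_simps)

lemma conv_kernel_integral:
  fixes x :: real assumes x: "0 < x"
  shows "((\<lambda>t. x / ((1 + (t*x)^2) * (1 + ((1-t)*x)^2))) has_integral gM x / (1 + x^2)) {0..1}"
proof -
  define A where "A = 2 / (x * (x^2 + 4))"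
  define B where "B = 1 / (x^2 + 4)"
  define Psi where "Psi t = A/2 * ln (1 + (t*x)^2) + B * arctan (t*x) - A/2 * ln (1 + ((1-t)*x)^2) - B * arctan ((1-t)*x)" for t
  have d: "(Psi has_vector_derivative (x / ((1 + (t*x)^2) * (1 + ((1-t)*x)^2)))) (at t within {0..1})" for t
  proof -
    have p1: "1 + (t*x)^2 > 0" "1 + ((1-t)*x)^2 > 0" by (auto intro: add_pos_nonneg)
    have p2: "x^2 + 4 > 0" using zero_le_power2[of x] by linarith
    define a where "a = 1 + (t*x)^2"
    define b where "b = 1 + ((1-t)*x)^2"
    have key: "(A*t*x + B) * b + (A*(1-t)*x + B) * a = 1"
    proof -
      have e1: "A*t*x + B = (2*t+1)/(x^2+4)" "A*(1-t)*x + B = (3-2*t)/(x^2+4)"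
      proof -
        have Ax: "A * x = 2/(x^2+4)" unfolding A_def using x by (simp add: divide_simps)
        have "A*t*x + B = t*(A*x) + B" "A*(1-t)*x + B = (1-t)*(A*x) + B" by (simp_all add: algebra_simps)
        thus "A*t*x + B = (2*t+1)/(x^2+4)" "A*(1-t)*x + B = (3-2*t)/(x^2+4)"
          unfolding Ax B_def by (simp_all add: add_divide_distrib diff_divide_distrib)
      qed
      have "(A*t*x + B) * b + (A*(1-t)*x + B) * a = ((2*t+1) * b + (3-2*t) * a) / (x^2+4)"
        unfolding e1 by (simp only: times_divide_eq_left add_divide_distrib[symmetric])
      also have "(2*t+1) * b + (3-2*t) * a = x^2 + 4" unfolding a_def b_def by (simp add: algebra_simps power2_eq_square)
      finally show ?thesis using p2 by simp
    qed
    have tgt: "x / (a*b) = x*(A*t*x+B)/a + x*(A*(1-t)*x+B)/b"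
    proof -
      have "x*(A*t*x+B)/a + x*(A*(1-t)*x+B)/b = x*((A*t*x + B) * b + (A*(1-t)*x + B) * a)/(a*b)"
        using p1 unfolding a_def b_def by (simp add: field_simps)
      thus ?thesis using key by simp
    qed
    have d1: "((\<lambda>t. ln(1+(t*x)^2)) has_real_derivative 2*(t*x)*x/a) (at t within {0..1})"
      unfolding a_def by (auto intro!: derivative_eq_intros simp: add_pos_nonneg)
    have d2: "((\<lambda>t. ln(1+((1-t)*x)^2)) has_real_derivative -(2*((1-t)*x)*x/b)) (at t within {0..1})"
      unfolding b_def by (auto intro!: derivative_eq_intros simp: add_pos_nonneg)
    have d3: "((\<lambda>t. arctan(t*x)) has_real_derivative x/a) (at t within {0..1})"
      unfolding a_def by (auto intro!: derivative_eq_intros simp: add_pos_nonneg divide_inverse_commute)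
    have d4: "((\<lambda>t. arctan((1-t)*x)) has_real_derivative -(x/b)) (at t within {0..1})"
      unfolding b_def by (auto intro!: derivative_eq_intros simp: add_pos_nonneg divide_inverse_commute)
    have "(Psi has_real_derivative (A/2*(2*(t*x)*x/a) + B*(x/a) - A/2*(-(2*((1-t)*x)*x/b)) - B*(-(x/b)))) (at t within {0..1})"
      unfolding Psi_def
      by (intro DERIV_diff DERIV_add DERIV_cmult d1 d2 d3 d4)
    moreover have "A/2*(2*(t*x)*x/a) + B*(x/a) - A/2*(-(2*((1-t)*x)*x/b)) - B*(-(x/b)) = x*(A*t*x+B)/a + x*(A*(1-t)*x+B)/b"
      using p1 unfolding a_def[symmetric] b_def[symmetric] by (simp add: field_simps)
    ultimately have "(Psi has_real_derivative (x*(A*t*x+B)/a + x*(A*(1-t)*x+B)/b)) (at t within {0..1})"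
      by simp
    hence "(Psi has_real_derivative (x / ((1 + (t*x)^2) * (1 + ((1-t)*x)^2)))) (at t within {0..1})"
      using tgt unfolding a_def b_def by simp
    thus ?thesis by (simp add: has_real_derivative_iff_has_vector_derivative)
  qed
  have "((\<lambda>t. x / ((1 + (t*x)^2) * (1 + ((1-t)*x)^2))) has_integral Psi 1 - Psi 0) {0..1}"
    by (rule fundamental_theorem_of_calculus) (use d in auto)
  moreover have "Psi 1 - Psi 0 = gM x / (1 + x^2)"
  proof -
    have "Psi 1 - Psi 0 = A * ln (1 + x^2) + 2 * B * arctan x" unfolding Psi_def by simp
    also have "\<dots> = gM x / (1 + x^2)" unfolding A_def B_def gM_def
      by (rule aux_alg) (use x sq_ne in auto)
    finally show ?thesis .
  qed
  ultimately show ?thesis by simp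
qed



lemma norm_integral_le_has_integral:
  fixes f :: "real \<Rightarrow> complex"
  assumes g: "(g has_integral I) S" and le: "\<And>x. x \<in> S \<Longrightarrow> norm (f x) \<le> g x"
  shows "norm (integral S f) \<le> I"
proof (cases "f integrable_on S")
  case True
  have "norm (integral S f) \<le> integral S g"
    using g True le by (intro integral_norm_bound_integral) auto
  thus ?thesis using g by (simp add: integral_unique)
next
  case False
  hence "integral S f = 0" by (simp add: not_integrable_integral)
  moreover have "0 \<le> I" using g le by (intro has_integral_nonneg[OF g]) (meson norm_ge_zero order_trans)
  ultimately show ?thesis by simp
qed

lemma linepath0: "linepath 0 q t = of_real t * q"
  by (simp add: linepath_def scaleR_conv_of_real)

lemma conv_eq_integral:
  "conv X F q \<tau> = integral {0..1} (\<lambda>t. X (of_real t * q) \<tau> * F (q - of_real t * q) \<tau> * q)"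
  unfolding conv_def contour_integral_integral linepath0 vector_derivative_linepath_at by simp

lemma conv_step:
  fixes X F :: "complex \<Rightarrow> real \<Rightarrow> complex" and u :: complex
  assumes u: "norm u = 1" and K: "0 \<le> K" and SF: "0 \<le> SF"
  and hX: "\<And>x. x \<in> {0..P} \<Longrightarrow> norm (X (of_real x * u) \<tau>) \<le> K * x^j * exp (\<nu>*x) / (1 + x^2)"
  and hF: "\<And>x. x \<in> {0..P} \<Longrightarrow> norm (F (of_real x * u) \<tau>) \<le> SF * exp (\<nu>*x) / (1 + x^2)"
  and x: "x \<in> {0..P}"
  shows "norm (conv X F (of_real x * u) \<tau>) \<le> (K * SF * M0) * x^j * exp (\<nu>*x) / (1 + x^2)"
proof (cases "x = 0")
  case True
  thus ?thesis using M0_pos K SF by (simp add: conv_eq_integral)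
next
  case False
  hence xp: "0 < x" using x by auto
  define q where "q = of_real x * u"
  define W where "W = K * SF * x^j * exp (\<nu>*x)"
  have W: "0 \<le> W" unfolding W_def using K SF xp by simp
  have pt: "norm (X (of_real t * q) \<tau> * F (q - of_real t * q) \<tau> * q)
      \<le> W * (x / ((1 + (t*x)^2) * (1 + ((1-t)*x)^2)))" if t: "t \<in> {0..1}" for t
  proof -
    have e1: "of_real t * q = of_real (t*x) * u" unfolding q_def by simp
    have e2: "q - of_real t * q = of_real ((1-t)*x) * u" unfolding q_def by (simp add: algebra_simps)
    have h1: "t*x \<le> x" "(1-t)*x \<le> x" using t xp mult_left_le_one_le[of x t] mult_left_le_one_le[of x "1-t"] by auto
    have xP: "x \<le> P" using x by simp
    have h2: "0 \<le> t*x" "0 \<le> (1-t)*x" using t xp by auto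
    have m1: "t*x \<in> {0..P}" "(1-t)*x \<in> {0..P}" using h1 h2 xP unfolding atLeastAtMost_iff by linarith+
    have b1: "norm (X (of_real t * q) \<tau>) \<le> K * x^j * exp (\<nu>*(t*x)) / (1 + (t*x)^2)"
    proof -
      have "norm (X (of_real t * q) \<tau>) \<le> K * (t*x)^j * exp (\<nu>*(t*x)) / (1 + (t*x)^2)"
        unfolding e1 using hX[OF m1(1)] .
      also have "\<dots> \<le> K * x^j * exp (\<nu>*(t*x)) / (1 + (t*x)^2)"
        using t xp K by (intro divide_right_mono mult_right_mono mult_left_mono power_mono)
          (auto simp: mult_left_le_one_le add_pos_nonneg)
      finally show ?thesis .
    qed
    have b2: "norm (F (q - of_real t * q) \<tau>) \<le> SF * exp (\<nu>*((1-t)*x)) / (1 + ((1-t)*x)^2)"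
      unfolding e2 using hF[OF m1(2)] .
    have nq: "norm q = x" unfolding q_def using u xp by (simp add: norm_mult)
    have "norm (X (of_real t * q) \<tau> * F (q - of_real t * q) \<tau> * q)
        = norm (X (of_real t * q) \<tau>) * norm (F (q - of_real t * q) \<tau>) * x"
      by (simp add: norm_mult nq)
    also have "\<dots> \<le> (K * x^j * exp (\<nu>*(t*x)) / (1 + (t*x)^2)) * (SF * exp (\<nu>*((1-t)*x)) / (1 + ((1-t)*x)^2)) * x"
      using b1 b2 xp K by (intro mult_right_mono mult_mono) (auto simp: add_pos_nonneg)
    also have "\<dots> = W * (x / ((1 + (t*x)^2) * (1 + ((1-t)*x)^2)))"
    proof -
      have "exp (\<nu>*(t*x)) * exp (\<nu>*((1-t)*x)) = exp (\<nu>*x)" by (simp add: exp_add[symmetric] algebra_simps)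
      thus ?thesis unfolding W_def by (simp add: field_simps)
    qed
    finally show ?thesis .
  qed
  have hi: "((\<lambda>t. W * (x / ((1 + (t*x)^2) * (1 + ((1-t)*x)^2)))) has_integral W * (gM x / (1 + x^2))) {0..1}"
    by (rule has_integral_mult_right[OF conv_kernel_integral[OF xp]])
  have "norm (conv X F q \<tau>) \<le> W * (gM x / (1 + x^2))"
    unfolding conv_eq_integral by (rule norm_integral_le_has_integral[OF hi pt])
  also have "\<dots> \<le> W * (M0 / (1 + x^2))"
    using gM_le_M0[of x] xp W by (intro mult_left_mono divide_right_mono) (auto simp: add_pos_nonneg)
  also have "\<dots> = (K * SF * M0) * x^j * exp (\<nu>*x) / (1 + x^2)" unfolding W_def by simp
  finally show ?thesis unfolding q_def .
qed



lemma Re_cube_ge: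
  fixes p :: complex
  assumes p: "p \<in> sector \<phi>" and ph: "0 < \<phi>" "\<phi> < pi/6"
  shows "cos (3*\<phi>) * (cmod p)^3 \<le> Re (p^3)"
proof -
  have a: "\<bar>Arg p\<bar> < \<phi>" using p unfolding sector_def by auto
  have "p^3 = rcis ((cmod p)^3) (3 * Arg p)"
    using DeMoivre2[of "cmod p" "Arg p" 3] by (simp add: rcis_cmod_Arg)
  hence "Re (p^3) = (cmod p)^3 * cos (3 * Arg p)" by simp
  moreover have "cos (3*\<phi>) \<le> cos (3 * Arg p)"
  proof -
    have "cos (3 * Arg p) = cos \<bar>3 * Arg p\<bar>" by simp
    moreover have "cos (3*\<phi>) \<le> cos \<bar>3 * Arg p\<bar>"
      using a ph by (subst cos_mono_le_eq) auto
    ultimately show ?thesis by simp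
  qed
  ultimately show ?thesis by (simp add: mult.commute mult_left_mono)
qed

lemma exp_integral:
  fixes R t :: real assumes R: "0 < R" and t: "0 \<le> t"
  shows "((\<lambda>\<tau>. exp (-R*(t-\<tau>))) has_integral (1 - exp (-R*t))/R) {0..t}"
proof -
  have d: "((\<lambda>\<tau>. exp (-R*(t-\<tau>))/R) has_vector_derivative exp (-R*(t-\<tau>))) (at \<tau> within {0..t})" for \<tau>
  proof -
    have "((\<lambda>\<tau>. exp (-R*(t-\<tau>))/R) has_real_derivative exp (-R*(t-\<tau>)) * R / R) (at \<tau> within {0..t})"
      by (auto intro!: derivative_eq_intros)
    thus ?thesis using R by (simp add: has_real_derivative_iff_has_vector_derivative)
  qed
  have "((\<lambda>\<tau>. exp (-R*(t-\<tau>))) has_integral exp (-R*(t-t))/R - exp (-R*(t-0))/R) {0..t}"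
    by (rule fundamental_theorem_of_calculus) (use t d in auto)
  thus ?thesis by (simp add: diff_divide_distrib)
qed



lemma powr_bound1:
  fixes P t T :: real and j :: nat
  assumes P: "0 < P" and t: "0 < t" "t \<le> T" and j: "j \<le> 3" and small: "P^3 * t \<le> 1"
  shows "P^j * t \<le> T powr ((3 - real j)/3)"
proof -
  have c1: "(P^3) powr (real j/3) = P powr (real j)"
  proof -
    have "(P^3) powr (real j/3) = (P powr 3) powr (real j/3)" using P by (simp add: powr_numeral)
    also have "\<dots> = P powr (3 * (real j/3))" by (simp only: powr_powr)
    also have "3 * (real j/3) = real j" by simp
    finally show ?thesis .
  qed
  have "(P^3 * t) powr (real j/3) = P powr (real j) * t powr (real j/3)"
    using P t by (simp only: powr_mult[of "P^3" t] c1 zero_le_power less_imp_le)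
  moreover have "t powr (real j/3) * t powr ((3 - real j)/3) = t"
  proof -
    have "t powr (real j/3) * t powr ((3 - real j)/3) = t powr (real j/3 + (3 - real j)/3)"
      by (simp only: powr_add)
    also have "real j/3 + (3 - real j)/3 = 1" by (simp add: divide_simps)
    finally show ?thesis using t by simp
  qed
  ultimately have "P^j * t = (P^3 * t) powr (real j/3) * t powr ((3 - real j)/3)"
    using P by (simp add: powr_realpow)
  also have "\<dots> \<le> 1 * T powr ((3 - real j)/3)"
  proof (intro mult_mono)
    show "(P^3 * t) powr (real j/3) \<le> 1" using P t small by (intro powr_le1) auto
    show "t powr ((3 - real j)/3) \<le> T powr ((3 - real j)/3)" using t j by (intro powr_mono2) auto
  qed auto
  finally show ?thesis by simp
qed

lemma powr_bound2:
  fixes P t T :: real and j :: nat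
  assumes P: "0 < P" and t: "0 < t" "t \<le> T" and j: "j \<le> 3" and big: "1 < P^3 * t"
  shows "P^j / P^3 \<le> T powr ((3 - real j)/3)"
proof -
  have e1: "P^j / P^3 = P powr (real j - 3)"
    using P by (simp add: powr_diff powr_realpow powr_numeral)
  have e2: "(P^3) powr (- ((3 - real j)/3)) = P powr (real j - 3)"
  proof -
    have "(P^3) powr (- ((3 - real j)/3)) = (P powr 3) powr (- ((3 - real j)/3))"
      using P by (simp add: powr_numeral)
    also have "\<dots> = P powr (3 * (- ((3 - real j)/3)))" by (simp add: powr_powr)
    also have "3 * (- ((3 - real j)/3)) = real j - 3" by (simp add: divide_simps)
    finally show ?thesis .
  qed
  have "P^j / P^3 = (P^3) powr (- ((3 - real j)/3))" using e1 e2 by simp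
  also have "\<dots> \<le> (1/t) powr (- ((3 - real j)/3))"
    using t big j P by (intro powr_mono2') (auto simp: field_simps)
  also have "\<dots> = t powr ((3 - real j)/3)" using t by (simp add: powr_minus_divide powr_divide)
  also have "\<dots> \<le> T powr ((3 - real j)/3)" using t j by (intro powr_mono2) auto
  finally show ?thesis .
qed



lemma time_bound:
  fixes p :: complex and X :: "real \<Rightarrow> complex"
  assumes p: "p \<in> sector \<phi>" and ph: "0 < \<phi>" "\<phi> < pi/6" and t: "t \<in> {0..T}" and j: "j \<le> 3"
  and W: "0 \<le> W" and hX: "\<And>\<tau>. \<tau> \<in> {0..t} \<Longrightarrow> norm (X \<tau>) \<le> W * (cmod p)^j"
  shows "norm (integral {0..t} (\<lambda>\<tau>. X \<tau> * exp (-(p^3) * of_real (t - \<tau>))))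
           \<le> W * (1 + 1/cos(3*\<phi>)) * T powr ((3 - real j)/3)"
proof -
  define P where "P = cmod p"
  have P: "0 < P" using p unfolding sector_def P_def by auto
  define R where "R = Re (p^3)"
  define \<kappa> where "\<kappa> = cos (3*\<phi>)"
  have \<kappa>: "0 < \<kappa>" unfolding \<kappa>_def using ph by (intro cos_gt_zero_pi) auto
  have RP: "\<kappa> * P^3 \<le> R" unfolding \<kappa>_def P_def R_def by (rule Re_cube_ge[OF p ph])
  have R: "0 < R" using RP \<kappa> P by (smt (verit) mult_pos_pos zero_less_power)
  have t0: "0 \<le> t" "t \<le> T" using t by auto
  have pt: "norm (X \<tau> * exp (-(p^3) * of_real (t - \<tau>))) \<le> W * P^j * exp (-R*(t-\<tau>))"
    if "\<tau> \<in> {0..t}" for \<tau>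
  proof -
    have e: "norm (exp (-(p^3) * of_real (t - \<tau>))) = exp (-R*(t-\<tau>))"
      unfolding R_def by (simp add: norm_exp_eq_Re)
    have "norm (X \<tau> * exp (-(p^3) * of_real (t - \<tau>))) = norm (X \<tau>) * exp (-R*(t-\<tau>))"
      by (simp only: norm_mult e)
    also have "\<dots> \<le> W * P^j * exp (-R*(t-\<tau>))" using hX[OF that] unfolding P_def by (intro mult_right_mono) auto
    finally show ?thesis .
  qed
  have hi: "((\<lambda>\<tau>. W * P^j * exp (-R*(t-\<tau>))) has_integral W * P^j * ((1 - exp (-R*t))/R)) {0..t}"
    by (rule has_integral_mult_right[OF exp_integral[OF R t0(1)]])
  have "norm (integral {0..t} (\<lambda>\<tau>. X \<tau> * exp (-(p^3) * of_real (t - \<tau>)))) \<le> W * P^j * ((1 - exp (-R*t))/R)"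
    by (rule norm_integral_le_has_integral[OF hi pt])
  also have "\<dots> \<le> W * ((1 + 1/\<kappa>) * T powr ((3 - real j)/3))"
  proof -
    have "P^j * ((1 - exp (-R*t))/R) \<le> (1 + 1/\<kappa>) * T powr ((3 - real j)/3)"
    proof (cases "t = 0")
      case True thus ?thesis using \<kappa> by simp
    next
      case False
      hence tp: "0 < t" using t0 by simp
      have Tp: "0 \<le> T powr ((3 - real j)/3)" by simp
      show ?thesis
      proof (cases "P^3 * t \<le> 1")
        case True
        have "(1 - exp (-R*t))/R \<le> t"
        proof -
          have "1 - exp (-R*t) \<le> R*t" using exp_ge_add_one_self[of "-R*t"] by simp
          thus ?thesis using R by (simp add: divide_le_eq mult.commute)
        qed
        hence "P^j * ((1 - exp (-R*t))/R) \<le> P^j * t" using P by (intro mult_left_mono) auto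
        also have "\<dots> \<le> T powr ((3 - real j)/3)" by (rule powr_bound1[OF P tp t0(2) j True])
        also have "\<dots> \<le> (1 + 1/\<kappa>) * T powr ((3 - real j)/3)" using \<kappa> Tp by (simp add: mult_le_cancel_right1)
        finally show ?thesis .
      next
        case False
        have "(1 - exp (-R*t))/R \<le> 1/R" using R by (intro divide_right_mono) auto
        also have "\<dots> \<le> 1/(\<kappa> * P^3)" using RP \<kappa> P R by (intro divide_left_mono) auto
        finally have "P^j * ((1 - exp (-R*t))/R) \<le> P^j * (1/(\<kappa> * P^3))" using P by (intro mult_left_mono) auto
        also have "\<dots> = (1/\<kappa>) * (P^j / P^3)" by simp
        also have "\<dots> \<le> (1/\<kappa>) * T powr ((3 - real j)/3)"
          using powr_bound2[OF P tp t0(2) j] False \<kappa> by (intro mult_left_mono) auto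
        also have "\<dots> \<le> (1 + 1/\<kappa>) * T powr ((3 - real j)/3)" using Tp by (intro mult_right_mono) auto
        finally show ?thesis .
      qed
    qed
    hence "W * (P^j * ((1 - exp (-R*t))/R)) \<le> W * ((1 + 1/\<kappa>) * T powr ((3 - real j)/3))"
      using W by (rule mult_left_mono)
    thus ?thesis by (simp only: mult.assoc)
  qed
  finally show ?thesis unfolding \<kappa>_def by (simp add: mult.assoc)
qed



lemma powdecay_half:
  fixes \<rho> :: real assumes r: "1 < \<rho>"
  shows "((\<lambda>x. (1+x) powr (-\<rho>)) has_integral 1/(\<rho>-1)) {0..}"
proof (rule has_integral_to_inf)
  define F where "F x = (1+x) powr (1-\<rho>) / (1-\<rho>)" for x :: real
  have int: "((\<lambda>x. (1+x) powr (-\<rho>)) has_integral (F y - F 0)) {0..y}" if "0 \<le> y" for y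
  proof (rule fundamental_theorem_of_calculus[OF that])
    fix x assume x: "x \<in> {0..y}"
    have "((\<lambda>x. (1+x) powr (1-\<rho>) / (1-\<rho>)) has_real_derivative (1 - \<rho>) * (1+x) powr (1-\<rho>-1) * 1 / (1-\<rho>)) (at x within {0..y})"
      using x by (auto intro!: derivative_eq_intros)
    moreover have "(1 - \<rho>) * (1+x) powr (1-\<rho>-1) * 1 / (1-\<rho>) = (1+x) powr (-\<rho>)" using r by simp
    ultimately show "(F has_vector_derivative (1+x) powr (-\<rho>)) (at x within {0..y})"
      unfolding F_def by (simp add: has_real_derivative_iff_has_vector_derivative)
  qed
  show "(\<lambda>x. (1+x) powr (-\<rho>)) integrable_on {0..y}" for y
  proof (cases "0 \<le> y")
    case True thus ?thesis using int[OF True] by blast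
  next
    case False thus ?thesis by (simp add: integrable_on_empty)
  qed
  have ev: "\<forall>\<^sub>F y in at_top. integral {0..y} (\<lambda>x. (1+x) powr (-\<rho>)) = F y - F 0"
    by (intro eventually_at_top_linorderI[of 0]) (use int integral_unique in blast)
  have "((\<lambda>y. (1+y) powr (1-\<rho>)) \<longlongrightarrow> 0) at_top"
    using r by (intro tendsto_neg_powr filterlim_tendsto_add_at_top[OF tendsto_const filterlim_ident]) auto
  hence "((\<lambda>y. F y - F 0) \<longlongrightarrow> 0 / (1-\<rho>) - F 0) at_top"
    unfolding F_def using r by (intro tendsto_intros) auto
  moreover have "0 / (1-\<rho>) - F 0 = 1/(\<rho>-1)" unfolding F_def using r by (simp add: divide_simps)
  ultimately show "((\<lambda>y. integral {0..y} (\<lambda>x. (1+x) powr (-\<rho>))) \<longlongrightarrow> 1/(\<rho>-1)) at_top"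
    using ev by (simp add: tendsto_cong)
  show "0 \<le> (1+y) powr (-\<rho>)" for y by simp
qed

lemma powdecay_integrable:
  fixes \<rho> :: real assumes r: "1 < \<rho>"
  shows "(\<lambda>x. (1+\<bar>x\<bar>) powr (-\<rho>)) integrable_on UNIV"
proof -
  define g where "g x = (if x \<in> {0..} then (1+x) powr (-\<rho>) else 0)" for x :: real
  have gi: "(g has_integral 1/(\<rho>-1)) UNIV"
    unfolding g_def has_integral_restrict_UNIV by (rule powdecay_half[OF r])
  hence "g absolutely_integrable_on UNIV"
    by (intro nonnegative_absolutely_integrable_1) (auto simp: g_def)
  hence "integrable lebesgue g" by (simp add: set_integrable_def)
  hence "integrable lebesgue (\<lambda>x. g (0 + (-1) * x))"
    by (subst lebesgue_integrable_real_affine_iff) auto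
  hence g2: "(\<lambda>x. g (-x)) integrable_on UNIV"
    using has_integral_integral_lebesgue by (auto simp: integrable_on_def)
  have "(\<lambda>x. g x + g (-x)) integrable_on UNIV"
    using gi g2 by (intro integrable_add) (auto simp: integrable_on_def)
  thus ?thesis
    by (rule integrable_spike[where S="{0}"]) (auto simp: g_def)
qed



lemma contour_C_eq: "contour_C c \<phi>' r = Complex (c - \<bar>r\<bar> * sin \<phi>') (r * cos \<phi>')"
  unfolding contour_C_def cis_conv_exp[symmetric]
  by (cases "r > 0"; cases "r < 0") (auto simp: complex_eq_iff sgn_if)

lemma Y_norm_ge1:
  assumes c: "0 < c" and C: "0 < cos \<phi>'"
  shows "c * cos \<phi>' \<le> cmod (contour_C c \<phi>' r)"
proof -
  define S where "S = sin \<phi>'"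
  define C where "C = cos \<phi>'"
  have SC: "S^2 + C^2 = 1" unfolding S_def C_def by simp
  have "(c - \<bar>r\<bar>*S)^2 + (r*C)^2 - ((c*C)^2 + (\<bar>r\<bar> - c*S)^2) = (1 - C^2 - S^2) * (c^2 - r^2)"
    by (simp add: power2_eq_square algebra_simps)
  moreover have "1 - C^2 - S^2 = 0" using SC by simp
  ultimately have "(c - \<bar>r\<bar>*S)^2 + (r*C)^2 = (c*C)^2 + (\<bar>r\<bar> - c*S)^2" by simp
  hence "(c*C)^2 \<le> (c - \<bar>r\<bar>*S)^2 + (r*C)^2" by simp
  hence "c*C \<le> sqrt ((c - \<bar>r\<bar>*S)^2 + (r*C)^2)" by (rule real_le_rsqrt)
  thus ?thesis unfolding contour_C_eq complex_norm S_def C_def .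
qed

lemma Y_norm_ge2:
  assumes C: "0 < cos \<phi>'"
  shows "\<bar>r\<bar> * cos \<phi>' \<le> cmod (contour_C c \<phi>' r)"
proof -
  have "\<bar>Im (contour_C c \<phi>' r)\<bar> \<le> cmod (contour_C c \<phi>' r)" by (rule abs_Im_le_cmod)
  moreover have "\<bar>Im (contour_C c \<phi>' r)\<bar> = \<bar>r\<bar> * cos \<phi>'" unfolding contour_C_eq using C by (simp add: abs_mult)
  ultimately show ?thesis by simp
qed

lemma cos_2pi3: "cos (2*pi/3) = -1/2"
proof -
  have "cos (2*pi/3) = cos (pi - pi/3)" by (rule arg_cong[where f=cos]) simp
  also have "\<dots> = - cos (pi/3)" by (rule cos_pi_minus)
  also have "\<dots> = -1/2" by (simp add: cos_60)
  finally show ?thesis .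
qed

lemma Y_in_domain:
  assumes r0: "0 < \<rho>0" and ph: "0 < \<phi>'" "\<phi>' < pi/6" and c: "\<rho>0 < c * cos \<phi>'"
  shows "contour_C c \<phi>' r \<in> b_domain \<rho>0"
proof -
  define Y where "Y = contour_C c \<phi>' r"
  define S where "S = sin \<phi>'"
  define C where "C = cos \<phi>'"
  have C: "0 < C" unfolding C_def using ph by (intro cos_gt_zero_pi) auto
  have cp: "0 < c" using r0 c C unfolding C_def by (smt (verit) mult_nonpos_nonneg)
  have n1: "c * C \<le> cmod Y" unfolding Y_def C_def by (rule Y_norm_ge1[OF cp C[unfolded C_def]])
  have nY: "\<rho>0 < cmod Y" using n1 c unfolding C_def by linarith
  hence Y0: "Y \<noteq> 0" using r0 by auto
  have S0: "0 \<le> S" unfolding S_def using ph by (intro sin_ge_zero) auto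
  have "sin \<phi>' < sin (pi/6)" using ph by (subst sin_mono_less_eq) auto
  hence S2: "S < 1/2" unfolding S_def by (simp add: sin_30)
  have SC: "S^2 + C^2 = 1" unfolding S_def C_def by simp
  have ReY: "Re Y = c - \<bar>r\<bar>*S" "Im Y = r * C" unfolding Y_def contour_C_eq S_def C_def by simp_all
  have key: "- cmod Y < 2 * Re Y"
  proof (cases "0 \<le> Re Y")
    case True thus ?thesis using nY r0 by linarith
  next
    case False
    define w where "w = \<bar>r\<bar>*S - c"
    have w: "0 < w" "w < \<bar>r\<bar>*S" unfolding w_def using False ReY cp by auto
    have "w^2 < (\<bar>r\<bar>*S)^2" using w by (intro power_strict_mono) auto
    also have "(\<bar>r\<bar>*S)^2 = r^2 * S^2" by (simp add: power_mult_distrib)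
    finally have "3 * w^2 < 3 * (r^2 * S^2)" by simp
    also have "3 * (r^2 * S^2) \<le> r^2 * C^2"
    proof -
      have "S^2 \<le> (1/2)^2" using S0 S2 by (intro power_mono) auto
      hence "3 * S^2 \<le> C^2" using SC by (simp add: power2_eq_square)
      thus ?thesis by (metis mult.left_commute mult_left_mono zero_le_power2)
    qed
    also have "r^2 * C^2 = (r*C)^2" by (simp add: power_mult_distrib)
    finally have h3: "3 * w^2 < (r*C)^2" .
    have "(2*w)^2 = 4 * w^2" by (simp add: power_mult_distrib)
    hence "(2*w)^2 < w^2 + (r*C)^2" using h3 by linarith
    hence "2*w < sqrt (w^2 + (r*C)^2)" by (rule real_less_rsqrt)
    moreover have "cmod Y = sqrt (w^2 + (r*C)^2)"
    proof -
      have "cmod Y = sqrt ((Re Y)^2 + (Im Y)^2)" by (simp add: cmod_def)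
      also have "(Re Y)^2 = w^2" unfolding ReY w_def by (simp add: power2_eq_square algebra_simps)
      finally show ?thesis unfolding ReY .
    qed
    ultimately show ?thesis unfolding ReY w_def by (simp add: algebra_simps)
  qed
  have cosA: "-1/2 < cos (Arg Y)" using key Y0 nY r0 by (simp add: cos_Arg field_simps)
  have "\<bar>Arg Y\<bar> < 2*pi/3"
  proof (rule ccontr)
    assume "\<not> \<bar>Arg Y\<bar> < 2*pi/3"
    hence "cos \<bar>Arg Y\<bar> \<le> cos (2*pi/3)" using Arg_bounded[of Y]
      by (subst cos_mono_le_eq) auto
    thus False using cosA cos_2pi3 by simp
  qed
  thus ?thesis using nY unfolding b_domain_def Y_def by simp
qed

lemma Re_uY:
  assumes u: "norm u = 1" "\<bar>Arg u\<bar> < \<phi>" and ph: "0 < \<phi>" "\<phi> < \<phi>'" "\<phi>' < pi/6" and c: "0 < c"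
  shows "Re (u * contour_C c \<phi>' r) \<le> c - sin (\<phi>' - \<phi>) * \<bar>r\<bar>"
proof -
  define a where "a = Arg u"
  have ua: "u = cis a" using rcis_cmod_Arg[of u] u unfolding a_def by (simp add: rcis_def)
  define S where "S = sin \<phi>'"
  define C where "C = cos \<phi>'"
  have ReE: "Re (u * contour_C c \<phi>' r) = c * cos a - \<bar>r\<bar> * S * cos a - r * C * sin a"
    unfolding ua contour_C_eq S_def C_def by (simp add: algebra_simps)
  have ca: "c * cos a \<le> c" using c by (simp add: mult_left_le_one_le)
  have a: "-\<phi> < a" "a < \<phi>" using u unfolding a_def by auto
  have s1: "sin (\<phi>' - \<phi>) \<le> sin (\<phi>' + a)" using a ph by (subst sin_mono_le_eq) auto
  have s2: "sin (\<phi>' - \<phi>) \<le> sin (\<phi>' - a)" using a ph by (subst sin_mono_le_eq) auto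
  show ?thesis
  proof (cases "0 \<le> r")
    case True
    have "Re (u * contour_C c \<phi>' r) = c * cos a - r * sin (\<phi>' + a)"
      unfolding ReE S_def C_def sin_add using True by (simp add: algebra_simps)
    also have "\<dots> \<le> c - r * sin (\<phi>' - \<phi>)" using ca s1 True mult_left_mono[OF s1 True] by linarith
    finally show ?thesis using True by (simp add: mult.commute)
  next
    case False
    have "Re (u * contour_C c \<phi>' r) = c * cos a + r * sin (\<phi>' - a)"
      unfolding ReE S_def C_def sin_diff using False by (simp add: algebra_simps)
    also have "\<dots> \<le> c + r * sin (\<phi>' - \<phi>)" using ca s2 False mult_left_mono_neg[OF s2, of r] by linarith
    finally show ?thesis using False by (simp add: mult.commute)
  qed
qed



lemma exp_neg_le_powr:
  fixes y \<theta> :: real assumes y: "0 \<le> y" and th: "0 \<le> \<theta>" "\<theta> \<le> 1"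
  shows "exp (-y) \<le> (1+y) powr (-\<theta>)"
proof -
  have "(1+y) powr \<theta> \<le> (1+y) powr 1" using y th by (intro powr_mono) auto
  also have "\<dots> = 1 + y" using y by simp
  also have "\<dots> \<le> exp y" by simp
  finally have a: "(1+y) powr \<theta> \<le> exp y" .
  have "exp (-y) = 1 / exp y" by (simp add: exp_minus field_simps)
  also have "\<dots> \<le> 1 / (1+y) powr \<theta>" using a y by (intro divide_left_mono) auto
  also have "\<dots> = (1+y) powr (-\<theta>)" using y by (simp add: powr_minus_divide)
  finally show ?thesis .
qed

lemma norm_i_exp: "norm (\<i> * exp (\<i> * complex_of_real a)) = 1"
  by (simp add: norm_mult norm_exp_eq_Re)

lemma B_bound:
  fixes b :: "complex \<Rightarrow> real \<Rightarrow> complex" and u :: complex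
  assumes r0: "0 < \<rho>0" and ph: "0 < \<phi>" "\<phi> < \<phi>'" "\<phi>' < pi/6" and c: "\<rho>0 < c * cos \<phi>'"
   and \<gamma>: "0 < \<gamma>"
   and bb: "\<forall>y\<in>b_domain \<rho>0. cmod y powr \<gamma> * cmod (b y \<tau>) < A"
   and u: "norm u = 1" "\<bar>Arg u\<bar> < \<phi>" and x: "0 < x"
  shows "\<exists>K \<theta>. 0 \<le> K \<and> \<theta> < 1 \<and> (\<forall>s\<in>{0<..x}. norm (Bfun c \<phi>' b (of_real s * u) \<tau>) \<le> K * s powr (-\<theta>))"
proof -
  define C where "C = cos \<phi>'"
  have C: "0 < C" unfolding C_def using ph by (intro cos_gt_zero_pi) auto
  have cp: "0 < c" using r0 c C unfolding C_def by (smt (verit) mult_nonpos_nonneg)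
  define \<delta> where "\<delta> = sin (\<phi>' - \<phi>)"
  have \<delta>: "0 < \<delta>" unfolding \<delta>_def using ph by (intro sin_gt_zero) auto
  define \<delta>' where "\<delta>' = min \<delta> (1/x)"
  have \<delta>': "0 < \<delta>'" "\<delta>' \<le> \<delta>" "\<delta>' \<le> 1/x" unfolding \<delta>'_def using \<delta> x by auto
  define \<gamma>' where "\<gamma>' = min \<gamma> 1"
  have \<gamma>': "0 < \<gamma>'" "\<gamma>' \<le> 1" "\<gamma>' \<le> \<gamma>" unfolding \<gamma>'_def using \<gamma> by auto
  define \<theta> where "\<theta> = 1 - \<gamma>'/2"
  have \<theta>: "0 \<le> \<theta>" "\<theta> \<le> 1" "\<theta> < 1" unfolding \<theta>_def using \<gamma>' by auto
  define \<rho> where "\<rho> = \<theta> + \<gamma>'"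
  have \<rho>: "1 < \<rho>" unfolding \<rho>_def \<theta>_def using \<gamma>' by auto
  define m where "m = min (c*C) C / 2"
  have m: "0 < m" unfolding m_def using cp C by auto
  have A0: "0 \<le> A"
  proof -
    have "contour_C c \<phi>' 0 \<in> b_domain \<rho>0" using Y_in_domain r0 ph c by auto
    from bspec[OF bb this] show ?thesis by (smt (verit) mult_nonneg_nonneg norm_ge_zero powr_ge_zero)
  qed
  define A' where "A' = A / (m powr \<gamma>' * \<rho>0 powr (\<gamma> - \<gamma>'))"
  have A': "0 \<le> A'" unfolding A'_def using A0 by simp
  define E where "E = exp (x*c) * \<delta>' powr (-\<theta>) * A'"
  have E: "0 \<le> E" unfolding E_def using A' by simp
  define h where "h r = (1 + \<bar>r\<bar>) powr (-\<rho>)" for r :: real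
  define I where "I = integral UNIV h"
  have hI: "(h has_integral I) UNIV" unfolding I_def h_def using powdecay_integrable[OF \<rho>] by auto
  have I: "0 \<le> I" using hI by (rule has_integral_nonneg) (simp add: h_def)
  define K where "K = E * I / (2*pi)"
  have K: "0 \<le> K" unfolding K_def using E I by simp
  have main: "norm (Bfun c \<phi>' b (of_real s * u) \<tau>) \<le> K * s powr (-\<theta>)" if s: "s \<in> {0<..x}" for s
  proof -
    have sp: "0 < s" "s \<le> x" using s by auto
    have sd: "s * \<delta>' \<le> 1"
    proof -
      have "s * \<delta>' \<le> x * (1/x)" using sp \<delta>' by (intro mult_mono) auto
      thus ?thesis using x by simp
    qed
    define G where "G r = exp ((of_real s * u) * contour_C c \<phi>' r) * b (contour_C c \<phi>' r) \<tau>
                          * (\<i> * exp (\<i> * of_real (\<phi>' * sgn r)))" for r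
    have pt: "norm (G r) \<le> (E * s powr (-\<theta>)) * h r" for r
    proof -
      define Y where "Y = contour_C c \<phi>' r"
      have Yd: "Y \<in> b_domain \<rho>0" unfolding Y_def using Y_in_domain r0 ph c by auto
      have nY0: "\<rho>0 < cmod Y" using Yd unfolding b_domain_def by auto
      have nYm: "m * (1 + \<bar>r\<bar>) \<le> cmod Y"
      proof -
        have "c * C \<le> cmod Y" unfolding Y_def C_def by (rule Y_norm_ge1[OF cp C[unfolded C_def]])
        moreover have "\<bar>r\<bar> * C \<le> cmod Y" unfolding Y_def C_def by (rule Y_norm_ge2[OF C[unfolded C_def]])
        moreover have "m \<le> c*C/2" "m \<le> C/2" unfolding m_def by auto
        moreover have "m * \<bar>r\<bar> \<le> C/2 * \<bar>r\<bar>" using \<open>m \<le> C/2\<close> by (intro mult_right_mono) auto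
        ultimately show ?thesis by (simp add: algebra_simps)
      qed
      have nb: "norm (b Y \<tau>) \<le> A' * (1 + \<bar>r\<bar>) powr (-\<gamma>')"
      proof -
        define L where "L = (m * (1 + \<bar>r\<bar>)) powr \<gamma>' * \<rho>0 powr (\<gamma> - \<gamma>')"
        have L: "0 < L" unfolding L_def using m r0 by (intro mult_pos_pos) (auto intro!: add_pos_nonneg)
        have "L \<le> cmod Y powr \<gamma>' * cmod Y powr (\<gamma> - \<gamma>')"
          unfolding L_def using nYm nY0 m r0 \<gamma>' by (intro mult_mono powr_mono2) (auto intro!: add_nonneg_nonneg)
        also have "\<dots> = cmod Y powr \<gamma>" by (simp add: powr_add[symmetric])
        finally have "L * cmod (b Y \<tau>) \<le> cmod Y powr \<gamma> * cmod (b Y \<tau>)" by (intro mult_right_mono) auto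
        also have "\<dots> < A" using bb Yd by auto
        finally have "cmod (b Y \<tau>) \<le> A / L" using L by (simp add: field_simps)
        also have "A / L = A' * (1 + \<bar>r\<bar>) powr (-\<gamma>')"
        proof -
          have "(m * (1 + \<bar>r\<bar>)) powr \<gamma>' = m powr \<gamma>' * (1 + \<bar>r\<bar>) powr \<gamma>'"
            using m by (simp add: powr_mult)
          thus ?thesis unfolding L_def A'_def using m r0
            by (simp add: powr_minus_divide field_simps)
        qed
        finally show ?thesis by simp
      qed
      have ne: "norm (exp ((of_real s * u) * Y)) \<le> exp (x*c) * (s powr (-\<theta>) * \<delta>' powr (-\<theta>) * (1+\<bar>r\<bar>) powr (-\<theta>))"
      proof -
        have "norm (exp ((of_real s * u) * Y)) = exp (s * Re (u * Y))" by (simp add: norm_exp_eq_Re mult.assoc)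
        also have "\<dots> \<le> exp (s * (c - \<delta> * \<bar>r\<bar>))"
          using Re_uY[OF u ph cp, of r] sp unfolding Y_def \<delta>_def by (intro exp_mono mult_left_mono) auto
        also have "s * (c - \<delta> * \<bar>r\<bar>) \<le> x*c + (-(s*\<delta>'*\<bar>r\<bar>))"
        proof -
          have "s * c \<le> x * c" using sp cp by (intro mult_right_mono) auto
          moreover have "s * \<delta>' * \<bar>r\<bar> \<le> s * \<delta> * \<bar>r\<bar>" using sp \<delta>' by (intro mult_right_mono mult_left_mono) auto
          ultimately show ?thesis by (simp add: algebra_simps)
        qed
        hence "exp (s * (c - \<delta> * \<bar>r\<bar>)) \<le> exp (x*c) * exp (-(s*\<delta>'*\<bar>r\<bar>))" by (simp add: exp_add[symmetric])
        also have "exp (-(s*\<delta>'*\<bar>r\<bar>)) \<le> (1 + s*\<delta>'*\<bar>r\<bar>) powr (-\<theta>)"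
          using sp \<delta>' \<theta> by (intro exp_neg_le_powr) auto
        also have "\<dots> \<le> (s*\<delta>' * (1+\<bar>r\<bar>)) powr (-\<theta>)"
        proof (rule powr_mono2')
          show "- \<theta> \<le> 0" using \<theta> by simp
          show "0 < s*\<delta>' * (1+\<bar>r\<bar>)" using sp \<delta>' by (intro mult_pos_pos) (auto intro!: add_pos_nonneg)
          have "s*\<delta>' * \<bar>r\<bar> \<le> \<bar>r\<bar>" using sd sp \<delta>' by (simp add: mult_left_le_one_le)
          thus "s*\<delta>' * (1+\<bar>r\<bar>) \<le> 1 + s*\<delta>'*\<bar>r\<bar>" using sd by (simp add: algebra_simps)
        qed
        also have "\<dots> = s powr (-\<theta>) * \<delta>' powr (-\<theta>) * (1+\<bar>r\<bar>) powr (-\<theta>)"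
          using sp \<delta>' by (simp add: powr_mult)
        finally show ?thesis by simp
      qed
      have "norm (G r) = norm (exp ((of_real s * u) * Y)) * norm (b Y \<tau>)"
        unfolding G_def Y_def by (simp add: norm_mult norm_i_exp)
      also have "\<dots> \<le> (exp (x*c) * (s powr (-\<theta>) * \<delta>' powr (-\<theta>) * (1+\<bar>r\<bar>) powr (-\<theta>))) * (A' * (1 + \<bar>r\<bar>) powr (-\<gamma>'))"
        using ne nb by (intro mult_mono) auto
      also have "\<dots> = (E * s powr (-\<theta>)) * ((1+\<bar>r\<bar>) powr (-\<theta>) * (1 + \<bar>r\<bar>) powr (-\<gamma>'))"
        unfolding E_def by (simp add: algebra_simps)
      also have "(1+\<bar>r\<bar>) powr (-\<theta>) * (1 + \<bar>r\<bar>) powr (-\<gamma>') = h r"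
        unfolding h_def \<rho>_def by (simp add: powr_add[symmetric])
      finally show ?thesis .
    qed
    have "norm (integral UNIV G) \<le> (E * s powr (-\<theta>)) * I"
      by (rule norm_integral_le_has_integral[OF has_integral_mult_right[OF hI] pt])
    moreover have "Bfun c \<phi>' b (of_real s * u) \<tau> = (1 / (2 * of_real pi * \<i>)) * integral UNIV G"
      unfolding Bfun_def G_def ..
    moreover have "norm (1 / (2 * of_real pi * \<i>) :: complex) = 1 / (2*pi)"
      by (simp add: norm_divide norm_mult)
    ultimately have "norm (Bfun c \<phi>' b (of_real s * u) \<tau>) = 1 / (2*pi) * norm (integral UNIV G)"
      by (simp only: norm_mult)
    also have "\<dots> \<le> 1 / (2*pi) * ((E * s powr (-\<theta>)) * I)"
      using \<open>norm (integral UNIV G) \<le> (E * s powr (-\<theta>)) * I\<close> by (intro mult_left_mono) auto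
    also have "\<dots> = K * s powr (-\<theta>)" unfolding K_def by simp
    finally show ?thesis .
  qed
  show ?thesis using K \<theta> main by blast
qed



lemma has_integral_refl_scale:
  fixes f :: "real \<Rightarrow> 'b::real_normed_vector"
  assumes f: "(f has_integral I) {0..L}" and L: "0 < L" and k: "0 < k"
  shows "((\<lambda>t. f (L - k*t)) has_integral I /\<^sub>R k) {0..L/k}"
proof -
  have "(f has_integral I) (cbox 0 L)" using f by simp
  from has_integral_affinity[OF this, of "-k" L] k
  have h: "((\<lambda>x. f ((-k) *\<^sub>R x + L)) has_integral (1 / \<bar>-k\<bar>) *\<^sub>R I)
      ((\<lambda>x. (1 / (-k)) *\<^sub>R x + -((1 / (-k)) *\<^sub>R L)) ` cbox 0 L)" by simp
  have img: "(\<lambda>x. (1 / (-k)) *\<^sub>R x + -((1 / (-k)) *\<^sub>R L)) ` cbox 0 L = {0..L/k}"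
  proof -
    have "(\<lambda>x. (1 / (-k)) *\<^sub>R x + -((1 / (-k)) *\<^sub>R L)) = (\<lambda>x. (-1/k) * x + L/k)"
      by (auto simp: fun_eq_iff field_simps)
    moreover have "(\<lambda>x. (-1/k) * x + L/k) ` {0..L} = {0..L/k}"
      using k L by (subst image_affinity_atLeastAtMost) (auto simp: field_simps)
    ultimately show ?thesis by simp
  qed
  have fe: "(\<lambda>x. f ((-k) *\<^sub>R x + L)) = (\<lambda>t. f (L - k*t))" by (auto simp: fun_eq_iff)
  have h2: "((\<lambda>t. f (L - k*t)) has_integral (1 / \<bar>-k\<bar>) *\<^sub>R I) {0..L/k}"
    using h unfolding img fe .
  have e: "1 / \<bar>-k\<bar> = inverse k" using k by (simp add: inverse_eq_divide)
  show ?thesis using h2 unfolding e .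
qed

lemma id_meas_lebesgue_on: "(\<lambda>t::real. t) \<in> borel_measurable (lebesgue_on S)"
  by (intro measurable_restrict_space1 measurable_completion) simp

lemma abs_conv_nonneg: "0 \<le> abs_conv B F q \<tau>"
  unfolding abs_conv_def
  by (cases "(\<lambda>s. cmod (B (of_real s * sgn q) \<tau>) * cmod (F (q - of_real s * sgn q) \<tau>)) integrable_on {0..cmod q}")
     (auto intro: integral_nonneg simp: not_integrable_integral)

lemma base_step:
  fixes F B :: "complex \<Rightarrow> real \<Rightarrow> complex" and u :: complex
  assumes u: "norm u = 1" and x: "0 < x"
   and Bb: "\<And>s. s \<in> {0<..x} \<Longrightarrow> norm (B (of_real s * u) \<tau>) \<le> KB * s powr (-\<theta>)"
   and th: "\<theta> < 1" and KB: "0 \<le> KB"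
   and Fb: "\<And>y. y \<in> {0..x} \<Longrightarrow> norm (F (of_real y * u) \<tau>) \<le> MF"
  shows "norm (conv (\<lambda>q s. q^j * F q s) B (of_real x * u) \<tau>) \<le> x^j * abs_conv B F (of_real x * u) \<tau>"
proof -
  define q where "q = of_real x * u"
  have nq: "norm q = x" unfolding q_def using u x by (simp add: norm_mult)
  have sq: "sgn q = u"
  proof -
    have "sgn q = q /\<^sub>R x" using nq by (simp add: sgn_div_norm)
    also have "\<dots> = u" unfolding q_def using x by (simp add: scaleR_conv_of_real)
    finally show ?thesis .
  qed
  have MF: "0 \<le> MF" using Fb[of 0] x by (meson atLeastAtMost_iff less_imp_le norm_ge_zero order_trans order_refl)
  define f where "f t = (of_real t * q)^j * F (of_real t * q) \<tau> * B (q - of_real t * q) \<tau> * q" for t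
  have cf: "conv (\<lambda>q s. q^j * F q s) B q \<tau> = integral {0..1} f"
    unfolding conv_eq_integral f_def by (simp add: mult.assoc)
  define H where "H t = x * (norm (B (q - of_real t * q) \<tau>) * norm (F (of_real t * q) \<tau>))" for t
  have H0: "0 \<le> H t" for t unfolding H_def using x by simp
  have nf: "norm (f t) = (t*x)^j * H t" if "0 \<le> t" for t
    unfolding f_def H_def using that x nq by (simp add: norm_mult norm_power abs_mult)
  show ?thesis
  proof (cases "f integrable_on {0..1}")
    case False
    thus ?thesis unfolding q_def[symmetric] cf using abs_conv_nonneg[of B F q \<tau>] x
      by (simp add: not_integrable_integral)
  next
    case fi: True
    define Ht where "Ht t = norm (f t) / (t*x)^j" for t
    have HtH: "Ht t \<le> H t" if "0 \<le> t" for t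
    proof (cases "t = 0 \<and> j > 0")
      case True thus ?thesis unfolding Ht_def using H0 by (simp add: power_0_left)
    next
      case False
      hence "(t*x)^j \<noteq> 0 \<or> j = 0" using that x by auto
      thus ?thesis unfolding Ht_def nf[OF that] by auto
    qed
    have HtH': "Ht t = H t" if "0 < t" for t
      unfolding Ht_def nf[OF less_imp_le[OF that]] using that x by simp
    have fm: "f \<in> borel_measurable (lebesgue_on {0..<1})"
      by (rule measurable_restrict_mono[OF integrable_imp_measurable[OF fi]]) auto
    have Htm: "Ht \<in> borel_measurable (lebesgue_on {0..<1})"
      unfolding Ht_def using fm id_meas_lebesgue_on by measurable
    define g where "g t = (x * KB * MF) * ((1-t)*x) powr (-\<theta>)" for t
    have gi: "g integrable_on {0..<1}"
    proof -
      obtain J where J: "((\<lambda>s. s powr (-\<theta>)) has_integral J) {0..x}"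
        using integrable_on_powr_from_0[of "-\<theta>" x] th x by auto
      have "((\<lambda>t. (x - x*t) powr (-\<theta>)) has_integral J /\<^sub>R x) {0..x/x}"
        by (rule has_integral_refl_scale[OF J x x])
      hence "(\<lambda>t. ((1-t)*x) powr (-\<theta>)) integrable_on {0..1}"
        using x by (auto simp: integrable_on_def algebra_simps)
      then obtain J2 where "((\<lambda>t. ((1-t)*x) powr (-\<theta>)) has_integral J2) {0..1}" by auto
      hence "g integrable_on {0..1}" unfolding g_def by (auto dest: has_integral_mult_right[where c="x * KB * MF"])
      thus ?thesis by (rule integrable_spike_set) (auto intro: negligible_subset[of "{1}"])
    qed
    have bnd: "norm (Ht t) \<le> g t" if t: "t \<in> {0..<1}" for t
    proof -
      have "norm (Ht t) = Ht t" unfolding Ht_def using t x by simp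
      also have "\<dots> \<le> H t" using HtH t by auto
      also have "\<dots> \<le> x * (KB * ((1-t)*x) powr (-\<theta>) * MF)"
      proof -
        have e1: "q - of_real t * q = of_real ((1-t)*x) * u" unfolding q_def by (simp add: algebra_simps)
        have e2: "of_real t * q = of_real (t*x) * u" unfolding q_def by simp
        have "norm (B (q - of_real t * q) \<tau>) \<le> KB * ((1-t)*x) powr (-\<theta>)"
          unfolding e1 using t x by (intro Bb) (auto simp: mult_le_cancel_right1)
        moreover have "norm (F (of_real t * q) \<tau>) \<le> MF"
          unfolding e2 using t x by (intro Fb) (auto simp: mult_le_cancel_right1)
        ultimately show ?thesis unfolding H_def using x KB by (intro mult_left_mono mult_mono) auto
      qed
      also have "\<dots> = g t" unfolding g_def by (simp add: algebra_simps)
      finally show ?thesis .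
    qed
    have "Ht integrable_on {0..<1}"
      by (rule measurable_bounded_by_integrable_imp_integrable[OF Htm gi bnd]) auto
    hence "Ht integrable_on {0..1}"
      by (rule integrable_spike_set) (auto intro: negligible_subset[of "{1}"])
    hence "H integrable_on {0..1}"
      by (rule integrable_spike[where S="{0}"]) (auto simp: HtH')
    then obtain IH where IH: "(H has_integral IH) {0..1}" by auto
    define k where "k = 1/x"
    have k: "0 < k" unfolding k_def using x by simp
    have "((\<lambda>s. H (1 - k * s)) has_integral IH /\<^sub>R k) {0 .. 1 / k}"
      by (rule has_integral_refl_scale[OF IH _ k]) simp
    hence h1: "((\<lambda>s. H (1 - s/x)) has_integral x * IH) {0..x}" using x unfolding k_def by simp
    define h where "h s = cmod (B (of_real s * sgn q) \<tau>) * cmod (F (q - of_real s * sgn q) \<tau>)" for s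
    have Hh: "H (1 - s/x) = x * h s" for s
    proof -
      have e1: "q - of_real (1 - s/x) * q = of_real s * u" unfolding q_def using x by (simp add: algebra_simps)
      have e2: "of_real (1 - s/x) * q = q - of_real s * u" unfolding q_def using x by (simp add: algebra_simps)
      show ?thesis unfolding H_def h_def sq e1 unfolding e2 ..
    qed
    have "((\<lambda>s. (1/x) * (x * h s)) has_integral (1/x) * (x * IH)) {0..x}"
      using h1 unfolding Hh by (rule has_integral_mult_right)
    hence "(h has_integral IH) {0..x}" using x by simp
    hence ac: "abs_conv B F q \<tau> = IH" unfolding abs_conv_def h_def[symmetric] nq by (rule integral_unique)
    have "norm (integral {0..1} f) \<le> x^j * IH"
    proof (rule norm_integral_le_has_integral[OF has_integral_mult_right[OF IH]])
      fix t :: real assume t: "t \<in> {0..1}"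
      have "(t*x)^j \<le> x^j" using t x by (intro power_mono) (auto simp: mult_le_cancel_right1)
      moreover have "norm (f t) = (t*x)^j * H t" using t by (intro nf) auto
      ultimately show "norm (f t) \<le> x^j * H t" using H0[of t] by (simp add: mult_right_mono)
    qed
    thus ?thesis unfolding q_def[symmetric] cf ac .
  qed
qed



lemma zero_in_closure_sector: "0 < \<phi> \<Longrightarrow> 0 \<in> closure (sector \<phi>)"
proof -
  assume ph: "0 < \<phi>"
  have "\<forall>e>0. \<exists>y\<in>sector \<phi>. dist y 0 < e"
  proof (intro allI impI)
    fix e :: real assume e: "0 < e"
    have "Arg (complex_of_real (e/2)) = 0" by (subst Arg_of_real) (use e in simp)
    hence "complex_of_real (e/2) \<in> sector \<phi>" unfolding sector_def using e ph by simp
    moreover have "dist (complex_of_real (e/2)) 0 < e" using e by simp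
    ultimately show "\<exists>y\<in>sector \<phi>. dist y 0 < e" by blast
  qed
  thus ?thesis by (simp add: closure_approachable)
qed

lemma Arg_sgn: "p \<noteq> 0 \<Longrightarrow> Arg (sgn p) = Arg p"
proof -
  assume p: "p \<noteq> 0"
  have "sgn p = of_real (1 / cmod p) * p" by (simp add: sgn_div_norm scaleR_conv_of_real divide_inverse mult.commute)
  thus ?thesis using p by simp
qed

lemma ray_in_closure:
  assumes p: "p \<in> sector \<phi>" and ph: "0 < \<phi>" and y: "0 \<le> y"
  shows "of_real y * sgn p \<in> closure (sector \<phi>)"
proof (cases "y = 0")
  case True thus ?thesis using zero_in_closure_sector[OF ph] by simp
next
  case False
  hence yp: "0 < y" using y by simp
  have p0: "p \<noteq> 0" using p unfolding sector_def by simp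
  have "Arg (of_real y * sgn p) = Arg p" using yp p0 by (simp add: Arg_sgn)
  moreover have "of_real y * sgn p \<noteq> 0" using yp p0 by (simp add: sgn_zero_iff)
  ultimately have "of_real y * sgn p \<in> sector \<phi>" using p unfolding sector_def by simp
  thus ?thesis using closure_subset by blast
qed

lemma nu_norm_nonneg:
  assumes ph: "0 < \<phi>" and T: "0 \<le> T"
  shows "0 \<le> nu_norm \<phi> T \<nu> G"
proof -
  have mem: "(0, 0) \<in> closure (sector \<phi>) \<times> {0..T}" using zero_in_closure_sector[OF ph] T by simp
  have "0 \<le> (SUP z\<in>closure (sector \<phi>) \<times> {0..T}.
        ereal ((1 + (cmod (fst z))^2) * exp (- \<nu> * cmod (fst z)) * norm (G (fst z) (snd z))))"
    by (rule SUP_upper2[OF mem]) (simp add: add_pos_nonneg)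
  thus ?thesis unfolding nu_norm_def ereal_zero_le_0_iff using M0_pos by simp
qed

lemma nu_norm_finite:
  assumes ph: "0 < \<phi>" and T: "0 \<le> T" and fin: "nu_norm \<phi> T \<nu> G < \<infinity>"
  shows "\<exists>S\<ge>0. nu_norm \<phi> T \<nu> G = ereal (M0 * S) \<and>
     (\<forall>z\<in>closure (sector \<phi>). \<forall>\<tau>\<in>{0..T}. (1 + (cmod z)^2) * exp (- \<nu> * cmod z) * norm (G z \<tau>) \<le> S)"
proof -
  define Su where "Su = (SUP z\<in>closure (sector \<phi>) \<times> {0..T}.
        ereal ((1 + (cmod (fst z))^2) * exp (- \<nu> * cmod (fst z)) * norm (G (fst z) (snd z))))"
  have nn: "nu_norm \<phi> T \<nu> G = ereal M0 * Su" unfolding nu_norm_def Su_def ..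
  have mem: "(0, 0) \<in> closure (sector \<phi>) \<times> {0..T}" using zero_in_closure_sector[OF ph] T by simp
  have S0: "0 \<le> Su" unfolding Su_def
    by (rule SUP_upper2[OF mem]) (simp add: add_pos_nonneg)
  have Sfin: "Su < \<infinity>"
  proof (rule ccontr)
    assume "\<not> Su < \<infinity>"
    hence "Su = \<infinity>" by simp
    hence "nu_norm \<phi> T \<nu> G = \<infinity>" unfolding nn using M0_pos by simp
    thus False using fin by simp
  qed
  obtain S where S: "Su = ereal S" using S0 Sfin by (cases Su) auto
  have "0 \<le> S" using S0 S by simp
  moreover have "nu_norm \<phi> T \<nu> G = ereal (M0 * S)" unfolding nn S by simp
  moreover have "(1 + (cmod z)^2) * exp (- \<nu> * cmod z) * norm (G z \<tau>) \<le> S"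
    if "z \<in> closure (sector \<phi>)" "\<tau> \<in> {0..T}" for z \<tau>
  proof -
    have "(z, \<tau>) \<in> closure (sector \<phi>) \<times> {0..T}" using that by simp
    hence "ereal ((1 + (cmod z)^2) * exp (- \<nu> * cmod z) * norm (G z \<tau>)) \<le> Su"
      unfolding Su_def by (rule SUP_upper2) simp
    thus ?thesis unfolding S by simp
  qed
  ultimately show ?thesis by blast
qed



lemma aux2: "(a::real) \<noteq> 0 \<Longrightarrow> (a * E1 * n) * E2 / a = n * (E1 * E2)" by (simp add: field_simps)

lemma weight_inv:
  fixes x \<nu> n S :: real
  assumes "(1 + x^2) * exp (- \<nu> * x) * n \<le> S"
  shows "n \<le> S * exp (\<nu>*x) / (1 + x^2)"
proof -
  have a: "0 < 1 + x^2" by (simp add: add_pos_nonneg)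
  have e: "exp (- \<nu> * x) * exp (\<nu>*x) = 1" by (simp add: exp_add[symmetric])
  have "((1 + x^2) * exp (- \<nu> * x) * n) * exp (\<nu>*x) / (1 + x^2) = n * (exp (- \<nu> * x) * exp (\<nu>*x))"
    by (rule aux2) (use a in simp)
  hence "n = ((1 + x^2) * exp (- \<nu> * x) * n) * exp (\<nu>*x) / (1 + x^2)"
    using a e by simp
  also have "\<dots> \<le> S * exp (\<nu>*x) / (1 + x^2)"
    using assms a by (intro divide_right_mono mult_right_mono) auto
  finally show ?thesis .
qed

lemma chain:
  fixes X0 F :: "complex \<Rightarrow> real \<Rightarrow> complex"
  assumes u: "norm u = 1" and SA: "0 \<le> SA" and SF: "0 \<le> SF"
  and h0: "\<And>x \<tau>. x \<in> {0..P} \<Longrightarrow> \<tau> \<in> {0..T} \<Longrightarrow> norm (X0 (of_real x * u) \<tau>) \<le> SA * x^j * exp (\<nu>*x) / (1 + x^2)"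
  and hF: "\<And>x \<tau>. x \<in> {0..P} \<Longrightarrow> \<tau> \<in> {0..T} \<Longrightarrow> norm (F (of_real x * u) \<tau>) \<le> SF * exp (\<nu>*x) / (1 + x^2)"
  shows "x \<in> {0..P} \<Longrightarrow> \<tau> \<in> {0..T} \<Longrightarrow>
    norm (conv_pow X0 F m (of_real x * u) \<tau>) \<le> (SA * (SF*M0)^m) * x^j * exp (\<nu>*x) / (1 + x^2)"
proof (induction m arbitrary: x)
  case 0 thus ?case using h0 by simp
next
  case (Suc m)
  have "norm (conv (conv_pow X0 F m) F (of_real x * u) \<tau>)
      \<le> ((SA * (SF*M0)^m) * SF * M0) * x^j * exp (\<nu>*x) / (1 + x^2)"
    by (rule conv_step[OF u _ SF _ _ Suc.prems(1)])
       (use SA SF M0_pos Suc.IH Suc.prems hF in auto)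
  thus ?case by (simp add: algebra_simps)
qed



lemma aux3: "(m::real) \<noteq> 0 \<Longrightarrow> C / (m * D) * (m * a) = C / D * a" by (simp add: field_simps)

theorem lemma13:
  fixes \<phi> :: real
  assumes "0 < \<phi>" and "\<phi> < pi / 6"
  shows "\<exists>C::real. \<forall>(T::real) (\<rho>0::real) (\<phi>'::real) (c::real) (\<alpha>::real) (\<beta>::real) (A::real)
      (b :: complex \<Rightarrow> real \<Rightarrow> complex) (F :: complex \<Rightarrow> real \<Rightarrow> complex)
      (j::nat) (k::nat) (\<nu>::real) (p::complex) (t::real).
    0 < T \<longrightarrow> 0 < \<rho>0 \<longrightarrow> \<phi> < \<phi>' \<longrightarrow> \<phi>' < pi / 6 \<longrightarrow> \<rho>0 < c * cos \<phi>' \<longrightarrow>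
    0 < \<alpha> \<longrightarrow> 0 < \<beta> \<longrightarrow>
    (\<forall>\<tau>\<in>{0..T}. (\<lambda>y. b y \<tau>) holomorphic_on b_domain \<rho>0) \<longrightarrow>
    (\<forall>\<tau>\<in>{0..T}. \<forall>y\<in>b_domain \<rho>0. cmod y powr (\<alpha> + real k * \<beta>) * cmod (b y \<tau>) < A) \<longrightarrow>
    j \<le> 3 \<longrightarrow> 2 * \<rho>0 + 1 < \<nu> \<longrightarrow> in_A \<phi> T \<nu> F \<longrightarrow>
    p \<in> sector \<phi> \<longrightarrow> t \<in> {0..T} \<longrightarrow>
    ereal (cmod (integral {0..t} (\<lambda>\<tau>.
        conv_pow (conv (\<lambda>q s. q ^ j * F q s) (Bfun c \<phi>' b)) F k p \<tau>
        * exp (- (p ^ 3) * of_real (t - \<tau>)))))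
    \<le> ereal (C / (M0 * (1 + (cmod p)^2)))
       * nu_norm \<phi> T \<nu> (abs_conv (Bfun c \<phi>' b) F)
       * nu_norm \<phi> T \<nu> F ^ k
       * ereal (exp (\<nu> * cmod p) * T powr ((3 - real j) / 3))"
proof -
  have \<kappa>: "0 < cos (3*\<phi>)" using assms by (intro cos_gt_zero_pi) auto
  show ?thesis
  proof (rule exI[of _ "1 + 1/cos(3*\<phi>)"], intro allI impI)
    fix T \<rho>0 \<phi>' c \<alpha> \<beta> A and b F :: "complex \<Rightarrow> real \<Rightarrow> complex" and j k :: nat and \<nu> :: real and p :: complex and t :: real
    assume T: "0 < T" and r0: "0 < \<rho>0" and ph1: "\<phi> < \<phi>'" and ph2: "\<phi>' < pi / 6"
      and cc: "\<rho>0 < c * cos \<phi>'" and al: "0 < \<alpha>" and be: "0 < \<beta>"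
      and hol: "\<forall>\<tau>\<in>{0..T}. (\<lambda>y. b y \<tau>) holomorphic_on b_domain \<rho>0"
      and bb: "\<forall>\<tau>\<in>{0..T}. \<forall>y\<in>b_domain \<rho>0. cmod y powr (\<alpha> + real k * \<beta>) * cmod (b y \<tau>) < A"
      and j: "j \<le> 3" and nu: "2 * \<rho>0 + 1 < \<nu>" and FA: "in_A \<phi> T \<nu> F"
      and p: "p \<in> sector \<phi>" and t: "t \<in> {0..T}"
    define C where "C = 1 + 1/cos(3*\<phi>)"
    have C: "0 < C" unfolding C_def using \<kappa> by (simp add: add_pos_pos)
    define P where "P = cmod p"
    define u where "u = sgn p"
    have p0: "p \<noteq> 0" using p unfolding sector_def by simp
    have P: "0 < P" unfolding P_def using p0 by simp
    have u: "norm u = 1" unfolding u_def using p0 by (simp add: norm_sgn)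
    have uA: "\<bar>Arg u\<bar> < \<phi>" unfolding u_def using p p0 by (simp add: Arg_sgn sector_def)
    have pu: "p = of_real P * u" unfolding P_def u_def by (simp add: sgn_div_norm scaleR_conv_of_real p0)
    have nupos: "0 < \<nu>" using nu r0 by linarith
    have ph: "0 < \<phi>" "\<phi> < pi/6" using assms by auto
    have ray: "of_real x * u \<in> closure (sector \<phi>)" if "0 \<le> x" for x
      unfolding u_def by (rule ray_in_closure[OF p ph(1) that])
    have nray: "cmod (of_real x * u) = x" if "0 \<le> x" for x using that u by (simp add: norm_mult)
    have \<gamma>: "0 < \<alpha> + real k * \<beta>" using al be by (simp add: add_pos_nonneg)
    have Ffin: "nu_norm \<phi> T \<nu> F < \<infinity>" using FA unfolding in_A_def by simp
    obtain SF where SF: "0 \<le> SF" "nu_norm \<phi> T \<nu> F = ereal (M0 * SF)"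
      and SFb: "\<forall>z\<in>closure (sector \<phi>). \<forall>\<tau>\<in>{0..T}. (1 + (cmod z)^2) * exp (- \<nu> * cmod z) * norm (F z \<tau>) \<le> SF"
      using nu_norm_finite[OF ph(1) _ Ffin] T by auto
    have hF: "norm (F (of_real x * u) \<tau>) \<le> SF * exp (\<nu>*x) / (1 + x^2)" if "x \<in> {0..P}" "\<tau> \<in> {0..T}" for x \<tau>
    proof (rule weight_inv)
      have "0 \<le> x" using that by simp
      thus "(1 + x^2) * exp (- \<nu> * x) * norm (F (of_real x * u) \<tau>) \<le> SF"
        using SFb ray[of x] nray[of x] that by force
    qed
    define B where "B = Bfun c \<phi>' b"
    define X0 where "X0 = conv (\<lambda>q s. q^j * F q s) B"
    define AC where "AC = abs_conv B F"
    define E where "E = exp (\<nu> * P) * T powr ((3 - real j) / 3)"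
    have E: "0 < E" unfolding E_def using T by simp
    define Cc where "Cc = C / (M0 * (1 + P^2))"
    have Cc: "0 < Cc" unfolding Cc_def using C M0_pos by (simp add: add_pos_nonneg)
    define LHS where "LHS = cmod (integral {0..t} (\<lambda>\<tau>. conv_pow X0 F k p \<tau> * exp (- (p ^ 3) * of_real (t - \<tau>))))"
    have tb: "LHS \<le> W * C * T powr ((3 - real j)/3)"
      if W: "0 \<le> W" and hW: "\<And>\<tau>. \<tau> \<in> {0..T} \<Longrightarrow> norm (conv_pow X0 F k p \<tau>) \<le> W * P^j" for W
      unfolding LHS_def C_def
      by (rule time_bound[OF p ph(1) ph(2) t j W]) (use hW t P_def in auto)
    have main: "ereal LHS \<le> ereal Cc * nu_norm \<phi> T \<nu> AC * nu_norm \<phi> T \<nu> F ^ k * ereal E"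
    proof (cases "nu_norm \<phi> T \<nu> AC < \<infinity>")
      case True
      obtain SA where SA: "0 \<le> SA" "nu_norm \<phi> T \<nu> AC = ereal (M0 * SA)"
        and SAb: "\<forall>z\<in>closure (sector \<phi>). \<forall>\<tau>\<in>{0..T}. (1 + (cmod z)^2) * exp (- \<nu> * cmod z) * norm (AC z \<tau>) \<le> SA"
        using nu_norm_finite[OF ph(1) _ True] T by auto
      have hA: "AC (of_real x * u) \<tau> \<le> SA * exp (\<nu>*x) / (1 + x^2)" if "x \<in> {0..P}" "\<tau> \<in> {0..T}" for x \<tau>
      proof -
        have "norm (AC (of_real x * u) \<tau>) \<le> SA * exp (\<nu>*x) / (1 + x^2)"
        proof (rule weight_inv)
          have "0 \<le> x" using that by simp
          thus "(1 + x^2) * exp (- \<nu> * x) * norm (AC (of_real x * u) \<tau>) \<le> SA"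
            using SAb ray[of x] nray[of x] that by force
        qed
        thus ?thesis by simp
      qed
      have h0: "norm (X0 (of_real x * u) \<tau>) \<le> SA * x^j * exp (\<nu>*x) / (1 + x^2)"
        if x: "x \<in> {0..P}" and \<tau>: "\<tau> \<in> {0..T}" for x \<tau>
      proof (cases "x = 0")
        case True
        thus ?thesis unfolding X0_def conv_eq_integral using SA by simp
      next
        case False
        hence xp: "0 < x" using x by simp
        obtain K \<theta> where K: "0 \<le> K" "\<theta> < 1"
          and KB: "\<forall>s\<in>{0<..x}. norm (B (of_real s * u) \<tau>) \<le> K * s powr (-\<theta>)"
          using B_bound[OF r0 ph(1) ph1 ph2 cc \<gamma> _ u uA xp, of b \<tau> A] bb \<tau> unfolding B_def by blast
        have Fb: "norm (F (of_real y * u) \<tau>) \<le> SF * exp (\<nu>*x)" if y: "y \<in> {0..x}" for y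
        proof -
          have "norm (F (of_real y * u) \<tau>) \<le> SF * exp (\<nu>*y) / (1 + y^2)" using hF[of y \<tau>] y x \<tau> by auto
          also have "\<dots> \<le> SF * exp (\<nu>*y) / 1"
            using SF by (intro divide_left_mono) (auto simp: add_pos_nonneg)
          also have "\<dots> = SF * exp (\<nu>*y)" by simp
          also have "\<dots> \<le> SF * exp (\<nu>*x)" using SF nupos y by (intro mult_left_mono) auto
          finally show ?thesis .
        qed
        have "norm (X0 (of_real x * u) \<tau>) \<le> x^j * AC (of_real x * u) \<tau>"
          unfolding X0_def AC_def
          by (rule base_step[where F=F and B=B and \<tau>=\<tau> and KB=K and \<theta>=\<theta> and MF="SF * exp (\<nu>*x)" and j=j and x=x and u=u])
             (use u xp K KB Fb in auto)
        also have "\<dots> \<le> x^j * (SA * exp (\<nu>*x) / (1 + x^2))"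
          using hA[OF x \<tau>] xp by (intro mult_left_mono) auto
        finally show ?thesis by (simp add: mult_ac)
      qed
      define W where "W = SA * (SF*M0)^k * exp (\<nu>*P) / (1 + P^2)"
      have W: "0 \<le> W" unfolding W_def using SA SF M0_pos by simp
      have hW: "norm (conv_pow X0 F k p \<tau>) \<le> W * P^j" if "\<tau> \<in> {0..T}" for \<tau>
      proof -
        have "norm (conv_pow X0 F k (of_real P * u) \<tau>) \<le> (SA * (SF*M0)^k) * P^j * exp (\<nu>*P) / (1 + P^2)"
          by (rule chain[OF u SA(1) SF(1) h0 hF]) (use P that in auto)
        thus ?thesis unfolding W_def pu[symmetric] by (simp add: algebra_simps)
      qed
      have "LHS \<le> W * C * T powr ((3 - real j)/3)" by (rule tb[OF W hW])
      also have "W * C * T powr ((3 - real j)/3) = Cc * (M0 * SA) * (M0 * SF)^k * E"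
      proof -
        have e1: "C / (M0 * (1 + P^2)) * (M0 * SA) = C / (1 + P^2) * SA"
          by (rule aux3) (use M0_pos in simp)
        show ?thesis unfolding W_def Cc_def E_def e1 by (simp add: mult_ac)
      qed
      finally show "ereal LHS \<le> ereal Cc * nu_norm \<phi> T \<nu> AC * nu_norm \<phi> T \<nu> F ^ k * ereal E"
        unfolding SA(2) SF(2) by simp
    next
      case False
      hence ACinf: "nu_norm \<phi> T \<nu> AC = \<infinity>" by simp
      show "ereal LHS \<le> ereal Cc * nu_norm \<phi> T \<nu> AC * nu_norm \<phi> T \<nu> F ^ k * ereal E"
      proof (cases "k > 0 \<and> SF = 0")
        case False
        hence "0 < ereal (M0 * SF) ^ k"
          using SF M0_pos by (cases "k = 0") (auto simp: zero_less_power)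
        hence Hinf: "ereal Cc * nu_norm \<phi> T \<nu> AC * nu_norm \<phi> T \<nu> F ^ k * ereal E = \<infinity>"
          unfolding ACinf SF(2) using Cc E by (simp del: ereal_power)
        show ?thesis unfolding Hinf by simp
      next
        case True
        then obtain k' where k': "k = Suc k'" by (cases k) auto
        have F0: "F (of_real x * u) \<tau> = 0" if "x \<in> {0..P}" "\<tau> \<in> {0..T}" for x \<tau>
          using hF[OF that] True by simp
        have "conv_pow X0 F k p \<tau> = 0" if \<tau>: "\<tau> \<in> {0..T}" for \<tau>
        proof -
          have "conv_pow X0 F k p \<tau> = integral {0..1} (\<lambda>s. conv_pow X0 F k' (of_real s * p) \<tau> * F (p - of_real s * p) \<tau> * p)"
            unfolding k' by (simp add: conv_eq_integral)
          also have "\<dots> = integral {0..1} (\<lambda>s::real. 0::complex)"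
          proof (rule Henstock_Kurzweil_Integration.integral_cong)
            fix s :: real assume s: "s \<in> {0..1}"
            have "p - of_real s * p = of_real ((1-s)*P) * u" using pu by (simp add: algebra_simps)
            moreover have "(1-s)*P \<in> {0..P}" using s P by (auto simp: mult_left_le_one_le)
            ultimately have "F (p - of_real s * p) \<tau> = 0" using F0[of "(1-s)*P" \<tau>] \<tau> by (simp only:)
            thus "conv_pow X0 F k' (of_real s * p) \<tau> * F (p - of_real s * p) \<tau> * p = 0" by simp
          qed
          finally show ?thesis by simp
        qed
        hence X0z: "conv_pow X0 F k p \<tau> = 0" if "\<tau> \<in> {0..t}" for \<tau> using that t by auto
        have "integral {0..t} (\<lambda>\<tau>. conv_pow X0 F k p \<tau> * exp (- (p ^ 3) * of_real (t - \<tau>)))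
            = integral {0..t} (\<lambda>\<tau>::real. 0::complex)"
          by (rule Henstock_Kurzweil_Integration.integral_cong) (simp add: X0z)
        hence "LHS = 0" unfolding LHS_def by simp
        moreover have "0 \<le> ereal Cc * nu_norm \<phi> T \<nu> AC * nu_norm \<phi> T \<nu> F ^ k * ereal E"
          unfolding ACinf SF(2) using True by simp
        ultimately show ?thesis by (simp add: zero_ereal_def)
      qed
    qed
    show "ereal (cmod (integral {0..t} (\<lambda>\<tau>.
        conv_pow (conv (\<lambda>q s. q ^ j * F q s) (Bfun c \<phi>' b)) F k p \<tau>
        * exp (- (p ^ 3) * of_real (t - \<tau>)))))
    \<le> ereal ((1 + 1/cos(3*\<phi>)) / (M0 * (1 + (cmod p)^2)))
       * nu_norm \<phi> T \<nu> (abs_conv (Bfun c \<phi>' b) F)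
       * nu_norm \<phi> T \<nu> F ^ k
       * ereal (exp (\<nu> * cmod p) * T powr ((3 - real j) / 3))"
      using main unfolding LHS_def X0_def B_def AC_def Cc_def E_def P_def C_def .
  qed
qed



end
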